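(* Let $\mathcal{B}=(T,\bowtie,\ell)$ be a homogeneous block with $\ell\equiv 1$, and let $c:T\to\{1,\dots,k\}$ be a minimal proper vertex coloring of the conflict graph $(T,\bowtie)$ (so $k$ is its chromatic number), produced by any correct minimal vertex coloring algorithm. Then $\mathcal S=\mathrm{LevelSchedule}(c^{-1}(1),\dots,c^{-1}(k))$ is an optimal schedule of $\mathcal{B}$, i.e., $\mathcal S$ is valid and $\mathrm{Lt}_{\ell}(\mathcal S)=\mathrm{MinLt}_{\ell}(\mathcal{B})$.
   Context: A block consists of a finite set $T$ of transactions, a symmetric irreflexive conflict relation $\bowtie$, and a length function $\ell:T\to\mathbb{N}_{>0}$. A schedule is a set $\mathcal S\subseteq T\times T$ with $(T,\mathcal S)$ acyclic; it is valid if every conflicting pair is joined by a directed path in $(T,\mathcal S)$ in one direction or the other. $\mathrm{Lt}_\ell(\mathcal S)$ is the maximum over directed simple paths $P$ (including single vertices) of $\sum_{v\in P}\ell(v)$; $\mathrm{MinLt}_\ell(\mathcal{B})$ is its minimum over valid schedules. $\mathrm{LevelSchedule}(B_1,\dots,B_k)$ for an ordered partition of $T$ into conflict-free sets: set $B_0=\emptyset$, $\mathcal S=\emptyset$; for $i=1,\dots,k$ and, for each $i$, for $j=i-1,\dots,0$ (decreasing): let $E=\{(u,v)\in B_j\times B_i: u\bowtie v\}$, let $P$ be the set of pairs $(x,y)$ with a directed path from $x$ to $y$ in the current $(T,\mathcal S)$, and set $\mathcal S\leftarrow\mathcal S\cup(E\setminus P)$; output $\mathcal S$. *)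

theory Defs
  imports Main
begin

definition is_block :: "'a set \<Rightarrow> ('a \<Rightarrow> 'a \<Rightarrow> bool) \<Rightarrow> ('a \<Rightarrow> nat) \<Rightarrow> bool" where
  "is_block T conf len \<longleftrightarrow> finite T \<and> (\<forall>x. \<not> conf x x) \<and> (\<forall>x y. conf x y \<longrightarrow> conf y x)
     \<and> (\<forall>t\<in>T. len t > 0)"

definition is_schedule :: "'a set \<Rightarrow> ('a \<times> 'a) set \<Rightarrow> bool" where
  "is_schedule T S \<longleftrightarrow> S \<subseteq> T \<times> T \<and> acyclic S"

definition valid_schedule :: "'a set \<Rightarrow> ('a \<Rightarrow> 'a \<Rightarrow> bool) \<Rightarrow> ('a \<times> 'a) set \<Rightarrow> bool" where
  "valid_schedule T conf S \<longleftrightarrow> is_schedule T S \<and>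
     (\<forall>u\<in>T. \<forall>v\<in>T. conf u v \<longrightarrow> (u, v) \<in> S\<^sup>+ \<or> (v, u) \<in> S\<^sup>+)"

definition is_simple_path :: "'a set \<Rightarrow> ('a \<times> 'a) set \<Rightarrow> 'a list \<Rightarrow> bool" where
  "is_simple_path T S xs \<longleftrightarrow> xs \<noteq> [] \<and> distinct xs \<and> set xs \<subseteq> T \<and>
     (\<forall>i. Suc i < length xs \<longrightarrow> (xs ! i, xs ! Suc i) \<in> S)"

definition Lt :: "'a set \<Rightarrow> ('a \<Rightarrow> nat) \<Rightarrow> ('a \<times> 'a) set \<Rightarrow> nat" where
  "Lt T len S = Max {sum_list (map len xs) | xs. is_simple_path T S xs}"

definition MinLt :: "'a set \<Rightarrow> ('a \<Rightarrow> 'a \<Rightarrow> bool) \<Rightarrow> ('a \<Rightarrow> nat) \<Rightarrow> nat" where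
  "MinLt T conf len = Min {Lt T len S | S. valid_schedule T conf S}"

text \<open>LevelSchedule(B_1,...,B_k) for the list Bs = [B_1,...,B_k]; B_0 = {}.\<close>
definition level_set :: "'a set list \<Rightarrow> nat \<Rightarrow> 'a set" where
  "level_set Bs j = (if j = 0 then {} else Bs ! (j - 1))"

definition level_inner :: "('a \<Rightarrow> 'a \<Rightarrow> bool) \<Rightarrow> 'a set list \<Rightarrow> nat \<Rightarrow> ('a \<times> 'a) set \<Rightarrow> ('a \<times> 'a) set" where
  "level_inner conf Bs i S0 = foldl (\<lambda>S j. S \<union>
      ({(u, v). u \<in> level_set Bs j \<and> v \<in> level_set Bs i \<and> conf u v} - S\<^sup>+))
      S0 (rev [0..<i])"

definition LevelSchedule :: "('a \<Rightarrow> 'a \<Rightarrow> bool) \<Rightarrow> 'a set list \<Rightarrow> ('a \<times> 'a) set" where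
  "LevelSchedule conf Bs = foldl (\<lambda>S i. level_inner conf Bs i S) {} [1..<length Bs + 1]"

definition proper_coloring :: "'a set \<Rightarrow> ('a \<Rightarrow> 'a \<Rightarrow> bool) \<Rightarrow> ('a \<Rightarrow> nat) \<Rightarrow> nat \<Rightarrow> bool" where
  "proper_coloring T conf c k \<longleftrightarrow> (\<forall>t\<in>T. c t \<in> {1..k}) \<and>
     (\<forall>u\<in>T. \<forall>v\<in>T. conf u v \<longrightarrow> c u \<noteq> c v)"

definition chromatic_number :: "'a set \<Rightarrow> ('a \<Rightarrow> 'a \<Rightarrow> bool) \<Rightarrow> nat" where
  "chromatic_number T conf = (LEAST k. \<exists>c. proper_coloring T conf c k)"

end

theory Submission
  imports Defs
begin

lemma foldl_inv:
  assumes "\<And>S x. x \<in> set xs \<Longrightarrow> P S \<Longrightarrow> P (f S x)" "P S0"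
  shows "P (foldl f S0 xs)"
  using assms by (induction xs arbitrary: S0) auto

lemma foldl_hit:
  assumes "\<And>S x. x \<in> set xs \<Longrightarrow> P S \<Longrightarrow> P (f S x)" "xh \<in> set xs" "\<And>S. P (f S xh)"
  shows "P (foldl f S0 xs)"
  using assms
proof (induction xs arbitrary: S0)
  case Nil then show ?case by simp
next
  case (Cons a xs)
  show ?case
  proof (cases "a = xh")
    case True
    have "P (f S0 a)" using True Cons.prems(3) by simp
    then show ?thesis using foldl_inv[of xs P f "f S0 a"] Cons.prems(1) by simp
  next
    case False
    then have "xh \<in> set xs" using Cons.prems(2) by simp
    then show ?thesis using Cons.IH[of "f S0 a"] Cons.prems(1,3) by simp
  qed
qed

lemma sum_len1:
  assumes "\<forall>t\<in>T. len t = (1::nat)" "set xs \<subseteq> T"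
  shows "sum_list (map len xs) = length xs"
  using assms by (induction xs) auto

lemma simple_path_length:
  assumes "finite T" "is_simple_path T S xs"
  shows "length xs \<le> card T"
proof -
  have "length xs = card (set xs)" using assms(2) distinct_card unfolding is_simple_path_def by metis
  also have "\<dots> \<le> card T" using assms card_mono unfolding is_simple_path_def by metis
  finally show ?thesis .
qed

lemma simple_path_rtrancl:
  assumes "is_simple_path T S xs" "i + d < length xs"
  shows "(xs ! i, xs ! (i + d)) \<in> S\<^sup>*"
  using assms(2)
proof (induction d)
  case 0 then show ?case by simp
next
  case (Suc d)
  then have "(xs ! i, xs ! (i + d)) \<in> S\<^sup>*" by simp
  moreover have "(xs ! (i + d), xs ! Suc (i + d)) \<in> S"
    using assms(1) Suc.prems unfolding is_simple_path_def by auto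
  ultimately show ?case by simp
qed

lemma lower_bound:
  assumes fin: "finite T" and len1: "\<forall>t\<in>T. len t = (1::nat)" and val: "valid_schedule T conf S"
  shows "chromatic_number T conf \<le> Lt T len S"
proof -
  have acyc: "acyclic S" and sub: "S \<subseteq> T \<times> T" using val unfolding valid_schedule_def is_schedule_def by auto
  define PS where "PS v = {length xs | xs. is_simple_path T S xs \<and> last xs = v}" for v
  define h where "h v = Max (PS v)" for v
  define A where "A = {sum_list (map len xs) | xs. is_simple_path T S xs}"
  have Aeq: "A = {length xs | xs. is_simple_path T S xs}"
    unfolding A_def using sum_len1[OF len1] unfolding is_simple_path_def by metis
  have finA: "finite A" unfolding Aeq
    by (rule finite_nat_set_iff_bounded_le[THEN iffD2]) (use simple_path_length[OF fin] in blast)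
  have finPS: "finite (PS v)" for v
    unfolding PS_def
    by (rule finite_nat_set_iff_bounded_le[THEN iffD2]) (use simple_path_length[OF fin] in blast)
  have single: "is_simple_path T S [v]" if "v \<in> T" for v
    using that unfolding is_simple_path_def by auto
  have nePS: "PS v \<noteq> {}" if "v \<in> T" for v
    unfolding PS_def using single[OF that] by force
  have hpos: "h v \<ge> 1" if "v \<in> T" for v
  proof -
    have "1 \<in> PS v" unfolding PS_def using single[OF that] by force
    then show ?thesis unfolding h_def using finPS by simp
  qed
  have hLt: "h v \<le> Lt T len S" if "v \<in> T" for v
  proof -
    have "PS v \<subseteq> A" unfolding PS_def Aeq by blast
    then show ?thesis unfolding h_def Lt_def A_def[symmetric]
      using Max_mono[OF _ nePS[OF that] finA] by blast
  qed
  have edge: "h u < h v" if uv: "(u, v) \<in> S" for u v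
  proof -
    have uT: "u \<in> T" and vT: "v \<in> T" using uv sub by auto
    have "h u \<in> PS u" unfolding h_def using Max_in[OF finPS nePS[OF uT]] .
    then obtain xs where xs: "is_simple_path T S xs" "last xs = u" "h u = length xs"
      unfolding PS_def by auto
    have xne: "xs \<noteq> []" using xs(1) unfolding is_simple_path_def by simp
    have vnot: "v \<notin> set xs"
    proof
      assume "v \<in> set xs"
      then obtain i where i: "i < length xs" "xs ! i = v" by (meson in_set_conv_nth)
      have "(xs ! i, xs ! (i + (length xs - 1 - i))) \<in> S\<^sup>*"
        using simple_path_rtrancl[OF xs(1), of i "length xs - 1 - i"] i(1) by simp
      moreover have "xs ! (i + (length xs - 1 - i)) = u"
        using i(1) xs(2) xne by (simp add: last_conv_nth)
      ultimately have "(v, u) \<in> S\<^sup>*" using i by simp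
      with uv have "(v, v) \<in> S\<^sup>+" by simp
      with acyc show False unfolding acyclic_def by blast
    qed
    have "is_simple_path T S (xs @ [v])"
      unfolding is_simple_path_def
    proof (intro conjI allI impI)
      show "xs @ [v] \<noteq> []" by simp
      show "distinct (xs @ [v])" using xs(1) vnot unfolding is_simple_path_def by simp
      show "set (xs @ [v]) \<subseteq> T" using xs(1) vT unfolding is_simple_path_def by simp
      fix i assume i: "Suc i < length (xs @ [v])"
      show "((xs @ [v]) ! i, (xs @ [v]) ! Suc i) \<in> S"
      proof (cases "Suc i < length xs")
        case True
        then show ?thesis using xs(1) unfolding is_simple_path_def by (simp add: nth_append)
      next
        case False
        then have "Suc i = length xs" using i by simp
        then have ii: "i = length xs - 1" by simp
        then have "(xs @ [v]) ! i = u" "(xs @ [v]) ! Suc i = v"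
          using xs(2) xne \<open>Suc i = length xs\<close> by (auto simp: nth_append last_conv_nth)
        then show ?thesis using uv by simp
      qed
    qed
    then have "Suc (h u) \<in> PS v" unfolding PS_def using xs(3) by force
    then have "Suc (h u) \<le> h v" unfolding h_def using finPS by simp
    then show ?thesis by simp
  qed
  have tr: "h u < h v" if "(u, v) \<in> S\<^sup>+" for u v
    using that
  proof (induction rule: trancl_induct)
    case (base y) then show ?case using edge by simp
  next
    case (step y z) then show ?case using edge[of y z] by simp
  qed
  have "proper_coloring T conf h (Lt T len S)"
    unfolding proper_coloring_def
  proof (intro conjI ballI impI)
    fix t assume "t \<in> T" then show "h t \<in> {1..Lt T len S}" using hpos hLt by simp
  next
    fix u v assume "u \<in> T" "v \<in> T" "conf u v"
    then have "(u, v) \<in> S\<^sup>+ \<or> (v, u) \<in> S\<^sup>+" using val unfolding valid_schedule_def by blast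
    then show "h u \<noteq> h v" using tr by fastforce
  qed
  then show ?thesis unfolding chromatic_number_def by (metis Least_le)
qed


lemma level_set_eq:
  assumes "1 \<le> j" "j \<le> k"
  shows "level_set (map (\<lambda>i. {t \<in> T. c t = i}) [1..<k + 1]) j = {t \<in> T. c t = j}"
  using assms unfolding level_set_def by (auto simp: nth_append)

lemma level_inner_sup: "S \<subseteq> level_inner conf Bs i S"
  unfolding level_inner_def by (rule foldl_inv[where P="\<lambda>X. S \<subseteq> X"]) auto

lemma LS_sub:
  fixes T :: "'a set" and c :: "'a \<Rightarrow> nat" and k :: nat
  defines "Bs \<equiv> map (\<lambda>i. {t \<in> T. c t = i}) [1..<k + 1]"
  shows "LevelSchedule conf Bs \<subseteq> {(u, v). u \<in> T \<and> v \<in> T \<and> c u < c v}" (is "_ \<subseteq> ?R")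
  unfolding LevelSchedule_def
proof (rule foldl_inv[where P="\<lambda>X. X \<subseteq> ?R"])
  fix S i assume i: "i \<in> set [1..<length Bs + 1]" and S: "S \<subseteq> ?R"
  have lb: "length Bs = k" unfolding Bs_def by simp
  show "level_inner conf Bs i S \<subseteq> ?R"
    unfolding level_inner_def
  proof (rule foldl_inv[where P="\<lambda>X. X \<subseteq> ?R"])
    fix X j assume j: "j \<in> set (rev [0..<i])" and X: "X \<subseteq> ?R"
    have li: "level_set Bs i = {t \<in> T. c t = i}"
      using i lb unfolding Bs_def by (intro level_set_eq) auto
    have lj: "level_set Bs j \<subseteq> {t \<in> T. c t = j}"
    proof (cases "j = 0")
      case True then show ?thesis by (simp add: level_set_def)
    next
      case False then show ?thesis using i j lb unfolding Bs_def by (subst level_set_eq) auto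
    qed
    show "X \<union> ({(u, v). u \<in> level_set Bs j \<and> v \<in> level_set Bs i \<and> conf u v} - X\<^sup>+) \<subseteq> ?R"
    proof -
      have jl: "j < i" using j by simp
      have "{(u, v). u \<in> level_set Bs j \<and> v \<in> level_set Bs i \<and> conf u v} \<subseteq> ?R"
        using li lj jl by fastforce
      then show ?thesis using X by blast
    qed
  qed (use S in auto)
qed simp

lemma LS_hit:
  fixes T :: "'a set" and c :: "'a \<Rightarrow> nat" and k :: nat
  defines "Bs \<equiv> map (\<lambda>i. {t \<in> T. c t = i}) [1..<k + 1]"
  assumes "u \<in> T" "v \<in> T" "conf u v" "1 \<le> c u" "c u < c v" "c v \<le> k"
  shows "(u, v) \<in> (LevelSchedule conf Bs)\<^sup>+"
  unfolding LevelSchedule_def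
proof (rule foldl_hit[where xh="c v" and P="\<lambda>Z. (u, v) \<in> Z\<^sup>+"])
  have lb: "length Bs = k" unfolding Bs_def by simp
  show "c v \<in> set [1..<length Bs + 1]" using assms lb by auto
  show "(u, v) \<in> (level_inner conf Bs x S)\<^sup>+" if "(u, v) \<in> S\<^sup>+" for S x
    by (rule trancl_mono[OF that level_inner_sup])
  fix S
  show "(u, v) \<in> (level_inner conf Bs (c v) S)\<^sup>+"
    unfolding level_inner_def
  proof (rule foldl_hit[where xh="c u" and P="\<lambda>Z. (u, v) \<in> Z\<^sup>+"])
    show "c u \<in> set (rev [0..<c v])" using assms by auto
    show "\<And>X j. j \<in> set (rev [0..<c v]) \<Longrightarrow> (u, v) \<in> X\<^sup>+ \<Longrightarrow> (u, v) \<in> (X \<union> ({(a, b). a \<in> level_set Bs j \<and> b \<in> level_set Bs (c v) \<and> conf a b} - X\<^sup>+))\<^sup>+"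
      by (erule trancl_mono) blast
    fix X
    have lv: "u \<in> level_set Bs (c u)" "v \<in> level_set Bs (c v)"
      using assms unfolding Bs_def by (subst level_set_eq; simp)+
    show "(u, v) \<in> (X \<union> ({(a, b). a \<in> level_set Bs (c u) \<and> b \<in> level_set Bs (c v) \<and> conf a b} - X\<^sup>+))\<^sup>+"
    proof (cases "(u, v) \<in> X\<^sup>+")
      case True then show ?thesis by (rule trancl_mono) blast
    next
      case False then show ?thesis by (intro r_into_trancl) (use assms(4) lv in blast)
    qed
  qed
qed


lemma path_color:
  assumes "is_simple_path T S xs" "S \<subseteq> {(u, v). u \<in> T \<and> v \<in> T \<and> c u < (c v::nat)}"
    "i < length xs"
  shows "c (xs ! 0) + i \<le> c (xs ! i)"
  using assms(3)
proof (induction i)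
  case 0 then show ?case by simp
next
  case (Suc i)
  have "(xs ! i, xs ! Suc i) \<in> S" using assms(1) Suc.prems unfolding is_simple_path_def by auto
  then have "c (xs ! i) < c (xs ! Suc i)" using assms(2) by auto
  then show ?case using Suc by simp
qed

lemma Lt_empty: "Lt {} len S = Lt {} len S'"
  unfolding Lt_def is_simple_path_def by simp

theorem corollary1:
  fixes T :: "'a set" and conf :: "'a \<Rightarrow> 'a \<Rightarrow> bool" and len :: "'a \<Rightarrow> nat"
    and c :: "'a \<Rightarrow> nat" and k :: nat
  assumes "is_block T conf len"
    and "\<forall>t\<in>T. len t = 1"
    and "proper_coloring T conf c k"
    and "k = chromatic_number T conf"
  shows "valid_schedule T conf (LevelSchedule conf (map (\<lambda>i. {t \<in> T. c t = i}) [1..<k + 1]))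
    \<and> Lt T len (LevelSchedule conf (map (\<lambda>i. {t \<in> T. c t = i}) [1..<k + 1])) = MinLt T conf len"
proof -
  define SL where "SL = LevelSchedule conf (map (\<lambda>i. {t \<in> T. c t = i}) [1..<k + 1])"
  define R where "R = {(u, v). u \<in> T \<and> v \<in> T \<and> c u < c v}"
  have fin: "finite T" using assms(1) unfolding is_block_def by simp
  have cr: "\<forall>t\<in>T. c t \<in> {1..k}" and cp: "\<forall>u\<in>T. \<forall>v\<in>T. conf u v \<longrightarrow> c u \<noteq> c v"
    using assms(3) unfolding proper_coloring_def by auto
  have SLR: "SL \<subseteq> R" unfolding SL_def R_def by (rule LS_sub)
  have Rtr: "c x < c y" if "(x, y) \<in> R\<^sup>+" for x y
    using that by (induction rule: trancl_induct) (auto simp: R_def)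
  have "acyclic R" unfolding acyclic_def using Rtr by blast
  then have acyc: "acyclic SL" using SLR acyclic_subset by blast
  have hit: "(u, v) \<in> SL\<^sup>+" if "u \<in> T" "v \<in> T" "conf u v" "c u < c v" for u v
    unfolding SL_def by (rule LS_hit) (use that cr in auto)
  have valid: "valid_schedule T conf SL"
    unfolding valid_schedule_def is_schedule_def
  proof (intro conjI ballI impI)
    show "SL \<subseteq> T \<times> T" using SLR unfolding R_def by auto
    show "acyclic SL" by (rule acyc)
    fix u v assume uv: "u \<in> T" "v \<in> T" "conf u v"
    then have "c u \<noteq> c v" using cp by auto
    moreover have "conf v u" using uv(3) assms(1) unfolding is_block_def by blast
    ultimately show "(u, v) \<in> SL\<^sup>+ \<or> (v, u) \<in> SL\<^sup>+"
    proof (cases "c u < c v")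
      case True then show ?thesis using hit[OF uv] by simp
    next
      case False
      with \<open>c u \<noteq> c v\<close> have "c v < c u" by simp
      then show ?thesis using hit[OF uv(2,1) \<open>conf v u\<close>] by simp
    qed
  qed
  have le: "Lt T len SL \<le> Lt T len S" if vS: "valid_schedule T conf S" for S
  proof (cases "T = {}")
    case True then show ?thesis using Lt_empty[of len SL S] by simp
  next
    case False
    then obtain t where t: "t \<in> T" by blast
    define A where "A = {sum_list (map len xs) | xs. is_simple_path T SL xs}"
    have Abound: "a \<le> k" if "a \<in> A" for a
    proof -
      obtain xs where xs: "is_simple_path T SL xs" "a = sum_list (map len xs)"
        using \<open>a \<in> A\<close> unfolding A_def by auto
      have a: "a = length xs" using xs sum_len1[OF assms(2)] unfolding is_simple_path_def by auto
      have ne: "xs \<noteq> []" and sx: "set xs \<subseteq> T" using xs(1) unfolding is_simple_path_def by auto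
      have "c (xs ! 0) + (length xs - 1) \<le> c (xs ! (length xs - 1))"
        using path_color[OF xs(1), of c "length xs - 1"] SLR ne unfolding R_def by simp
      moreover have "xs ! 0 \<in> T" "xs ! (length xs - 1) \<in> T" using ne sx by auto
      moreover have "c (xs ! 0) \<ge> 1" "c (xs ! (length xs - 1)) \<le> k"
        using cr \<open>xs ! 0 \<in> T\<close> \<open>xs ! (length xs - 1) \<in> T\<close> by auto
      ultimately show ?thesis using a ne by linarith
    qed
    have finA: "finite A" using Abound finite_nat_set_iff_bounded_le by blast
    have "is_simple_path T SL [t]" unfolding is_simple_path_def using t by simp
    then have "sum_list (map len [t]) \<in> A" unfolding A_def by blast
    then have neA: "A \<noteq> {}" by blast
    have "Lt T len SL \<le> k" unfolding Lt_def A_def[symmetric]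
      using finA neA Abound by simp
    also have "k \<le> Lt T len S" using lower_bound[OF fin assms(2) vS] assms(4) by simp
    finally show ?thesis .
  qed
  have "MinLt T conf len = Lt T len SL"
    unfolding MinLt_def
  proof (rule Min_eqI)
    have ieq: "{Lt T len S | S. valid_schedule T conf S} = (\<lambda>S. Lt T len S) ` {S. valid_schedule T conf S}"
      by blast
    have "{S. valid_schedule T conf S} \<subseteq> Pow (T \<times> T)"
      unfolding valid_schedule_def is_schedule_def by blast
    show "finite {Lt T len S | S. valid_schedule T conf S}"
    proof -
      have "finite (Pow (T \<times> T))" using fin by simp
      then have "finite {S. valid_schedule T conf S}" using \<open>{S. valid_schedule T conf S} \<subseteq> Pow (T \<times> T)\<close>
        by (rule finite_subset[rotated])
      then show ?thesis unfolding \<open>{Lt T len S | S. valid_schedule T conf S} = (\<lambda>S. Lt T len S) ` {S. valid_schedule T conf S}\<close>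
        by simp
    qed
    show "\<And>y. y \<in> {Lt T len S | S. valid_schedule T conf S} \<Longrightarrow> Lt T len SL \<le> y"
      using le by blast
    show "Lt T len SL \<in> {Lt T len S | S. valid_schedule T conf S}" using valid by blast
  qed
  then show ?thesis using valid unfolding SL_def by simp
qed

end
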